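(* Let $Q$ be a nonrecursive connected query, let $a$ be the maximum radius of a rule of $\Pi_Q$, and let $\mathbf T$ be the set of time points occurring in $\Pi_Q$. Let $\tau_a$ be a time point and let $\tau_0$ be the maximum of $\tau_a$ and the elements of $\mathbf T$. For every dataset $D'$, predicate $P$, tuple of objects $\vec o$ and time point $\tau\le\tau_0+a\cdot(\mathrm{rank}(\Pi_Q)-\mathrm{rank}(P))$: if $\Pi_Q\cup D'\models P(\vec o,\tau)$, then $\Pi_Q\cup D''\models P(\vec o,\tau)$, where $D''$ consists of the rigid facts of $D'$ and the temporal facts of $D'$ whose time argument $\tau'$ satisfies $\tau'\le\tau_0+\mathrm{rad}(\Pi_Q)$.
   Context: Temporal Datalog. Constants are partitioned into objects and integer time points; variables into object variables and time variables. A time term is a time point, a time variable, or an expression $t+k$ with $t$ a time variable and $k\in\mathbb{Z}$. Each predicate is either extensional (EDB) or intensional (IDB) and has an arity $n\ge0$, each position being of object sort or time sort; a predicate is rigid if all its positions are of object sort, and temporal if its last position is of time sort and all others are of object sort. An atom $P(t_1,\dots,t_n)$ has terms of the required sorts. A rule is $\bigwedge_i\alpha_i\to\alpha$ with $\alpha$ and all $\alpha_i$ rigid or temporal atoms, $\alpha$ IDB whenever the body is nonempty, and every head variable occurring in the body. A program is a finite set of rules. A fact is a ground rigid or temporal atom without $+$ (identified with the rule $\top\to\alpha$); a dataset is a finite set of EDB facts. Rules are read as universally quantified first-order sentences with $+$ interpreted as integer addition; $\Pi\models\alpha$ denotes entailment. A query is $Q=\langle P_Q,\Pi_Q\rangle$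 with $\Pi_Q$ a program and $P_Q$ an IDB predicate of $\Pi_Q$. Predicate $P$ depends on $P'$ in $\Pi$ if some rule of $\Pi$ has $P$ in the head and $P'$ in the body; $\Pi$ (or a query with program $\Pi$) is nonrecursive if the graph of this dependency relation is acyclic. $\mathrm{rank}(P)=\mathrm{rank}(P,\Pi_Q)$ is $0$ if $P$ does not occur in a rule head of $\Pi_Q$, and otherwise the maximum of $\mathrm{rank}(P')+1$ over predicates $P'$ on which $P$ depends; $\mathrm{rank}(\Pi_Q)$ is the maximum rank of a predicate of $\Pi_Q$. A rule is connected if it contains at most one time variable and, if a time variable occurs in the body, it also occurs in the head; a query is connected if all its rules are. For a time term $s$, $\Delta(s)=k$ if $s=t+k$ with $t$ a variable, and $\Delta(s)=0$ otherwise. The radius of a connected rule $r$ mentioning a time variable is the maximum of $|\Delta(s)-\Delta(s')|$ where $s$ is the time argument of the head and $s'$ the time argument of a body atom of $r$. The radius $\mathrm{rad}(\Pi)$ of a connected program is the number of rules of $\Pi$ times the maximum radius of a rule of $\Pi$. *)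

theory Defs
  imports Main
begin

datatype sort = SObj | STime

text \<open>Terms: object constants, object variables, time points, time variables,
  and time expressions t+k (t a time variable, k an integer).
  Object variables and time variables live in separate namespaces (constructors).\<close>
datatype ('o,'v) tm = OC 'o | OV 'v | TC int | TV 'v | TVP 'v int

datatype ('p,'o,'v) atom = Atom (pred: 'p) (args: "('o,'v) tm list")

datatype ('p,'o,'v) rule = Rule (body: "('p,'o,'v) atom list") (head: "('p,'o,'v) atom")

datatype 'o val = VO 'o | VT int

type_synonym ('p,'o) gatom = "'p \<times> 'o val list"

fun tm_sort :: "('o,'v) tm \<Rightarrow> sort" where
  "tm_sort (OC _) = SObj"
| "tm_sort (OV _) = SObj"
| "tm_sort (TC _) = STime"
| "tm_sort (TV _) = STime"
| "tm_sort (TVP _ _) = STime"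

fun val_sort :: "'o val \<Rightarrow> sort" where
  "val_sort (VO _) = SObj"
| "val_sort (VT _) = STime"

text \<open>A signature is given by srt (arity and sorts of positions)
  and idb (IDB vs. EDB).\<close>

definition rigid :: "('p \<Rightarrow> sort list) \<Rightarrow> 'p \<Rightarrow> bool" where
  "rigid srt p = (\<forall>s\<in>set (srt p). s = SObj)"

definition temporal :: "('p \<Rightarrow> sort list) \<Rightarrow> 'p \<Rightarrow> bool" where
  "temporal srt p = (srt p \<noteq> [] \<and> last (srt p) = STime \<and> (\<forall>s\<in>set (butlast (srt p)). s = SObj))"

definition wf_atom :: "('p \<Rightarrow> sort list) \<Rightarrow> ('p,'o,'v) atom \<Rightarrow> bool" where
  "wf_atom srt a = (map tm_sort (args a) = srt (pred a) \<and> (rigid srt (pred a) \<or> temporal srt (pred a)))"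

fun tvars_tm :: "('o,'v) tm \<Rightarrow> 'v set" where
  "tvars_tm (TV v) = {v}"
| "tvars_tm (TVP v _) = {v}"
| "tvars_tm _ = {}"

fun ovars_tm :: "('o,'v) tm \<Rightarrow> 'v set" where
  "ovars_tm (OV v) = {v}"
| "ovars_tm _ = {}"

definition tvars_atom :: "('p,'o,'v) atom \<Rightarrow> 'v set" where
  "tvars_atom a = (\<Union>t\<in>set (args a). tvars_tm t)"

definition ovars_atom :: "('p,'o,'v) atom \<Rightarrow> 'v set" where
  "ovars_atom a = (\<Union>t\<in>set (args a). ovars_tm t)"

definition atoms_rule :: "('p,'o,'v) rule \<Rightarrow> ('p,'o,'v) atom set" where
  "atoms_rule r = insert (head r) (set (body r))"

definition tvars_rule :: "('p,'o,'v) rule \<Rightarrow> 'v set" where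
  "tvars_rule r = (\<Union>a\<in>atoms_rule r. tvars_atom a)"

definition wf_rule :: "('p \<Rightarrow> sort list) \<Rightarrow> ('p \<Rightarrow> bool) \<Rightarrow> ('p,'o,'v) rule \<Rightarrow> bool" where
  "wf_rule srt idb r =
     ((\<forall>a\<in>atoms_rule r. wf_atom srt a)
      \<and> (body r \<noteq> [] \<longrightarrow> idb (pred (head r)))
      \<and> ovars_atom (head r) \<subseteq> (\<Union>b\<in>set (body r). ovars_atom b)
      \<and> tvars_atom (head r) \<subseteq> (\<Union>b\<in>set (body r). tvars_atom b))"

definition program :: "('p \<Rightarrow> sort list) \<Rightarrow> ('p \<Rightarrow> bool) \<Rightarrow> ('p,'o,'v) rule set \<Rightarrow> bool" where
  "program srt idb \<Pi> = (finite \<Pi> \<and> (\<forall>r\<in>\<Pi>. wf_rule srt idb r))"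

definition fact :: "('p \<Rightarrow> sort list) \<Rightarrow> ('p,'o) gatom \<Rightarrow> bool" where
  "fact srt f = (map val_sort (snd f) = srt (fst f) \<and> (rigid srt (fst f) \<or> temporal srt (fst f)))"

definition dataset :: "('p \<Rightarrow> sort list) \<Rightarrow> ('p \<Rightarrow> bool) \<Rightarrow> ('p,'o) gatom set \<Rightarrow> bool" where
  "dataset srt idb D = (finite D \<and> (\<forall>f\<in>D. fact srt f \<and> \<not> idb (fst f)))"

definition preds :: "('p,'o,'v) rule set \<Rightarrow> 'p set" where
  "preds \<Pi> = {pred a | a r. r \<in> \<Pi> \<and> a \<in> atoms_rule r}"

definition query :: "('p \<Rightarrow> sort list) \<Rightarrow> ('p \<Rightarrow> bool) \<Rightarrow> 'p \<Rightarrow> ('p,'o,'v) rule set \<Rightarrow> bool" where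
  "query srt idb PQ \<Pi> = (program srt idb \<Pi> \<and> PQ \<in> preds \<Pi> \<and> idb PQ)"

fun eval_tm :: "('v \<Rightarrow> 'o) \<Rightarrow> ('v \<Rightarrow> int) \<Rightarrow> ('o,'v) tm \<Rightarrow> 'o val" where
  "eval_tm vo vt (OC c) = VO c"
| "eval_tm vo vt (OV v) = VO (vo v)"
| "eval_tm vo vt (TC i) = VT i"
| "eval_tm vo vt (TV v) = VT (vt v)"
| "eval_tm vo vt (TVP v k) = VT (vt v + k)"

definition eval_atom :: "('v \<Rightarrow> 'o) \<Rightarrow> ('v \<Rightarrow> int) \<Rightarrow> ('p,'o,'v) atom \<Rightarrow> ('p,'o) gatom" where
  "eval_atom vo vt a = (pred a, map (eval_tm vo vt) (args a))"

definition sat_rule :: "('p,'o) gatom set \<Rightarrow> ('p,'o,'v) rule \<Rightarrow> bool" where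
  "sat_rule I r = (\<forall>vo vt. (\<forall>b\<in>set (body r). eval_atom vo vt b \<in> I) \<longrightarrow> eval_atom vo vt (head r) \<in> I)"

definition entails :: "('p,'o,'v) rule set \<Rightarrow> ('p,'o) gatom set \<Rightarrow> ('p,'o) gatom \<Rightarrow> bool" where
  "entails \<Pi> D \<alpha> = (\<forall>I. (\<forall>r\<in>\<Pi>. sat_rule I r) \<longrightarrow> D \<subseteq> I \<longrightarrow> \<alpha> \<in> I)"

definition deps :: "('p,'o,'v) rule set \<Rightarrow> ('p \<times> 'p) set" where
  "deps \<Pi> = {(pred (head r), pred b) | r b. r \<in> \<Pi> \<and> b \<in> set (body r)}"

definition nonrecursive :: "('p,'o,'v) rule set \<Rightarrow> bool" where
  "nonrecursive \<Pi> = acyclic (deps \<Pi>)"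

text \<open>rank(P): length of a longest dependency chain starting at P (for nonrecursive programs this
  is the unique solution of rank(P) = 0 if P heads no rule, else max (rank(P')+1) over dependencies).\<close>
definition rank :: "('p,'o,'v) rule set \<Rightarrow> 'p \<Rightarrow> nat" where
  "rank \<Pi> P = Max {n. \<exists>f. f 0 = P \<and> (\<forall>i<n. (f i, f (Suc i)) \<in> deps \<Pi>)}"

definition rank_prog :: "('p,'o,'v) rule set \<Rightarrow> nat" where
  "rank_prog \<Pi> = Max (rank \<Pi> ` preds \<Pi>)"

definition connected_rule :: "('p,'o,'v) rule \<Rightarrow> bool" where
  "connected_rule r = (card (tvars_rule r) \<le> 1
      \<and> (\<Union>b\<in>set (body r). tvars_atom b) \<subseteq> tvars_atom (head r))"

fun delta :: "('o,'v) tm \<Rightarrow> int" where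
  "delta (TVP _ k) = k"
| "delta _ = 0"

definition has_time :: "('p,'o,'v) atom \<Rightarrow> bool" where
  "has_time a = (args a \<noteq> [] \<and> tm_sort (last (args a)) = STime)"

definition rule_radius :: "('p,'o,'v) rule \<Rightarrow> nat" where
  "rule_radius r = (if tvars_rule r = {} then 0 else
     Max (insert 0 {nat \<bar>delta (last (args (head r))) - delta (last (args b))\<bar> | b. b \<in> set (body r) \<and> has_time b}))"

definition max_radius :: "('p,'o,'v) rule set \<Rightarrow> nat" where
  "max_radius \<Pi> = Max (insert 0 (rule_radius ` \<Pi>))"

definition rad :: "('p,'o,'v) rule set \<Rightarrow> nat" where
  "rad \<Pi> = card \<Pi> * max_radius \<Pi>"

definition time_points :: "('p,'o,'v) rule set \<Rightarrow> int set" where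
  "time_points \<Pi> = {i. \<exists>r\<in>\<Pi>. \<exists>a\<in>atoms_rule r. TC i \<in> set (args a)}"

definition restrict_ds :: "('p \<Rightarrow> sort list) \<Rightarrow> ('p,'o) gatom set \<Rightarrow> int \<Rightarrow> ('p,'o) gatom set" where
  "restrict_ds srt D bound = {f \<in> D. rigid srt (fst f)
      \<or> (temporal srt (fst f) \<and> (\<exists>t'. last (snd f) = VT t' \<and> t' \<le> bound))}"

end

theory Submission
  imports Defs
begin

lemma chain_trancl:
  assumes "\<forall>i<n. (f i, f (Suc i)) \<in> r" "j \<le> n" "i < j"
  shows "(f i, f j) \<in> r\<^sup>+"
  using assms(2,3)
proof (induction j)
  case 0 then show ?case by simp
next
  case (Suc j)
  show ?case
  proof (cases "i = j")
    case True then show ?thesis using assms(1) Suc.prems by auto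
  next
    case False
    then have "(f i, f j) \<in> r\<^sup>+" using Suc by auto
    moreover have "(f j, f (Suc j)) \<in> r" using assms(1) Suc.prems by auto
    ultimately show ?thesis by (rule trancl_into_trancl)
  qed
qed

lemma chain_le_card:
  assumes fin: "finite \<Pi>" and ac: "acyclic (deps \<Pi>)"
    and ch: "\<forall>i<n. (f i, f (Suc i)) \<in> deps \<Pi>"
  shows "n \<le> card \<Pi>"
proof -
  have ex: "\<forall>i<n. \<exists>r. r \<in> \<Pi> \<and> pred (head r) = f i"
  proof (intro allI impI)
    fix i assume "i < n"
    then have "(f i, f (Suc i)) \<in> deps \<Pi>" using ch by simp
    then obtain r b where "r \<in> \<Pi>" "f i = pred (head r)"
      unfolding deps_def by auto
    then show "\<exists>r. r \<in> \<Pi> \<and> pred (head r) = f i" by auto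
  qed
  define g where "g i = (SOME r. r \<in> \<Pi> \<and> pred (head r) = f i)" for i
  have g: "g i \<in> \<Pi> \<and> pred (head (g i)) = f i" if "i < n" for i
    using someI_ex[OF ex[rule_format, OF that]] unfolding g_def .
  have dist: "f i \<noteq> f j" if "i < j" "j \<le> n" for i j
  proof
    assume "f i = f j"
    with chain_trancl[OF ch that(2) that(1)] have "(f i, f i) \<in> (deps \<Pi>)\<^sup>+" by simp
    with ac show False by (simp add: acyclic_def)
  qed
  have "inj_on g {..<n}"
  proof (rule inj_onI)
    fix i j assume a: "i \<in> {..<n}" "j \<in> {..<n}" "g i = g j"
    have "f i = pred (head (g i))" using g a(1) by simp
    also have "\<dots> = f j" using g a(2,3) by simp
    finally have fij: "f i = f j" .
    show "i = j"
    proof (rule ccontr)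
      assume "i \<noteq> j"
      then consider "i < j" | "j < i" by linarith
      then show False
      proof cases
        case 1 then show False using dist[of i j] a fij by simp
      next
        case 2 then show False using dist[of j i] a fij by simp
      qed
    qed
  qed
  moreover have "g ` {..<n} \<subseteq> \<Pi>" using g by auto
  ultimately have "card {..<n} \<le> card \<Pi>" by (rule card_inj_on_le) (rule fin)
  then show ?thesis by simp
qed

lemma rank_set:
  assumes "finite \<Pi>" "acyclic (deps \<Pi>)"
  shows "finite {n. \<exists>f. f 0 = P \<and> (\<forall>i<n. (f i, f (Suc i)) \<in> deps \<Pi>)}"
    "0 \<in> {n. \<exists>f. f 0 = P \<and> (\<forall>i<n. (f i, f (Suc i)) \<in> deps \<Pi>)}"
    "{n. \<exists>f. f 0 = P \<and> (\<forall>i<n. (f i, f (Suc i)) \<in> deps \<Pi>)} \<subseteq> {..card \<Pi>}"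
proof -
  show sub: "{n. \<exists>f. f 0 = P \<and> (\<forall>i<n. (f i, f (Suc i)) \<in> deps \<Pi>)} \<subseteq> {..card \<Pi>}" using chain_le_card[OF assms(1,2)] by auto
  then show "finite {n. \<exists>f. f 0 = P \<and> (\<forall>i<n. (f i, f (Suc i)) \<in> deps \<Pi>)}" using finite_subset by blast
  show "0 \<in> {n. \<exists>f. f 0 = P \<and> (\<forall>i<n. (f i, f (Suc i)) \<in> deps \<Pi>)}" by (rule CollectI, rule exI[of _ "\<lambda>_. P"]) simp
qed

lemma rank_le_card:
  assumes "finite \<Pi>" "acyclic (deps \<Pi>)"
  shows "rank \<Pi> P \<le> card \<Pi>"
proof -
  note r = rank_set[OF assms, of P]
  have "rank \<Pi> P \<in> {n. \<exists>f. f 0 = P \<and> (\<forall>i<n. (f i, f (Suc i)) \<in> deps \<Pi>)}"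
    unfolding rank_def by (rule Max_in[OF r(1)]) (use r(2) in blast)
  then show ?thesis using r(3) by auto
qed

lemma rank_dep:
  assumes "finite \<Pi>" "acyclic (deps \<Pi>)" "(Q, Q') \<in> deps \<Pi>"
  shows "rank \<Pi> Q' + 1 \<le> rank \<Pi> Q"
proof -
  note r = rank_set[OF assms(1,2), of Q']
  have "rank \<Pi> Q' \<in> {n. \<exists>f. f 0 = Q' \<and> (\<forall>i<n. (f i, f (Suc i)) \<in> deps \<Pi>)}"
    unfolding rank_def by (rule Max_in[OF r(1)]) (use r(2) in blast)
  then obtain f where f: "f 0 = Q'" "\<forall>i<rank \<Pi> Q'. (f i, f (Suc i)) \<in> deps \<Pi>" by blast
  define g where "g i = (case i of 0 \<Rightarrow> Q | Suc j \<Rightarrow> f j)" for i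
  have "\<forall>i<Suc (rank \<Pi> Q'). (g i, g (Suc i)) \<in> deps \<Pi>"
  proof (intro allI impI)
    fix i assume "i < Suc (rank \<Pi> Q')"
    then show "(g i, g (Suc i)) \<in> deps \<Pi>"
      using f assms(3) by (cases i) (auto simp: g_def)
  qed
  moreover have "g 0 = Q" by (simp add: g_def)
  ultimately have "Suc (rank \<Pi> Q') \<in> {n. \<exists>f. f 0 = Q \<and> (\<forall>i<n. (f i, f (Suc i)) \<in> deps \<Pi>)}"
    by blast
  then show ?thesis unfolding rank_def using rank_set[OF assms(1,2), of Q] by simp
qed

lemma finite_preds:
  assumes "finite \<Pi>"
  shows "finite (preds \<Pi>)"
proof -
  have "preds \<Pi> = (\<Union>r\<in>\<Pi>. pred ` atoms_rule r)" unfolding preds_def by auto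
  then show ?thesis using assms by (simp add: atoms_rule_def)
qed

lemma finite_time_points:
  fixes \<Pi> :: "('p,'o,'v) rule set"
  assumes "finite \<Pi>"
  shows "finite (time_points \<Pi>)"
proof -
  have "time_points \<Pi> = (\<Union>r\<in>\<Pi>. \<Union>a\<in>atoms_rule r. TC -` set (args a))"
    unfolding time_points_def by auto
  moreover have fa: "finite (TC -` set (args a))" for a :: "('p,'o,'v) atom"
    by (rule finite_vimageI) (auto simp: inj_def)
  ultimately show ?thesis using assms by (simp add: atoms_rule_def fa)
qed

lemma eval_tvar:
  assumes "v \<in> tvars_tm x"
  shows "eval_tm vo vt x = VT (vt v + delta x)"
  using assms by (cases x) auto

lemma head_tvar_last:
  assumes "wf_atom srt h" "y \<in> set (args h)" "tm_sort y = STime"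
  shows "y = last (args h)"
proof -
  have ne: "args h \<noteq> []" using assms(2) by auto
  then obtain xs z where xz: "args h = xs @ [z]" by (metis append_butlast_last_id)
  have m: "map tm_sort (args h) = srt (pred h)" using assms(1) unfolding wf_atom_def by auto
  have st: "STime \<in> set (srt (pred h))"
  proof -
    have "tm_sort y \<in> tm_sort ` set (args h)" using assms(2) by (rule imageI)
    then show ?thesis using m assms(3) by (metis list.set_map)
  qed
  have "\<not> rigid srt (pred h)" using st unfolding rigid_def by auto
  then have t: "temporal srt (pred h)" using assms(1) unfolding wf_atom_def by auto
  have bl: "butlast (srt (pred h)) = map tm_sort xs" using m xz by (metis butlast_snoc map_append list.map(1) list.map(2))
  show ?thesis
  proof (rule ccontr)
    assume "y \<noteq> last (args h)"
    then have "y \<in> set xs" using assms(2) xz by auto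
    then have "tm_sort y \<in> set (butlast (srt (pred h)))" using bl by auto
    then show False using t assms(3) unfolding temporal_def by auto
  qed
qed

theorem mainTheorem11:
  fixes srt :: "'p \<Rightarrow> sort list" and idb :: "'p \<Rightarrow> bool"
    and PQ :: 'p and \<Pi> :: "('p,'o,'v) rule set"
    and \<tau>a :: int and D' :: "('p,'o) gatom set" and P :: 'p and os :: "'o list" and \<tau> :: int
  assumes "query srt idb PQ \<Pi>"
    and "nonrecursive \<Pi>"
    and "\<forall>r\<in>\<Pi>. connected_rule r"
    and "dataset srt idb D'"
    and "srt P = replicate (length os) SObj @ [STime]"
    and "\<tau> \<le> Max (insert \<tau>a (time_points \<Pi>))
              + int (max_radius \<Pi>) * (int (rank_prog \<Pi>) - int (rank \<Pi> P))"
    and "entails \<Pi> D' (P, map VO os @ [VT \<tau>])"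
  shows "entails \<Pi> (restrict_ds srt D' (Max (insert \<tau>a (time_points \<Pi>)) + int (rad \<Pi>)))
           (P, map VO os @ [VT \<tau>])"
proof -
  define \<tau>0 where "\<tau>0 = Max (insert \<tau>a (time_points \<Pi>))"
  define a where "a = max_radius \<Pi>"
  define R where "R = rank_prog \<Pi>"
  define good :: "('p,'o) gatom \<Rightarrow> bool" where
    "good g = (snd g \<noteq> [] \<longrightarrow> (\<forall>t. last (snd g) = VT t \<longrightarrow> t \<le> \<tau>0 + int a * (int R - int (rank \<Pi> (fst g)))))" for g
  have prog: "program srt idb \<Pi>" using assms(1) unfolding query_def by auto
  then have fin: "finite \<Pi>" and wf: "\<And>r. r \<in> \<Pi> \<Longrightarrow> wf_rule srt idb r"
    unfolding program_def by auto
  have ac: "acyclic (deps \<Pi>)" using assms(2) unfolding nonrecursive_def .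
  have finT: "finite (time_points \<Pi>)" using finite_time_points[OF fin] .
  have finP: "finite (preds \<Pi>)" using finite_preds[OF fin] .
  have PQin: "PQ \<in> preds \<Pi>" using assms(1) unfolding query_def by auto
  have rankR: "rank \<Pi> Q \<le> R" if "Q \<in> preds \<Pi>" for Q
    unfolding R_def rank_prog_def using finP that by simp
  have Rcard: "R \<le> card \<Pi>"
  proof -
    have "R \<in> rank \<Pi> ` preds \<Pi>" unfolding R_def rank_prog_def
      using Max_in finP PQin by blast
    then show ?thesis using rank_le_card[OF fin ac] by auto
  qed
  have tp: "i \<le> \<tau>0" if "i \<in> time_points \<Pi>" for i
    unfolding \<tau>0_def using finT that by simp
  have rr: "rule_radius r \<le> a" if "r \<in> \<Pi>" for r
    unfolding a_def max_radius_def using fin that by simp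
  have core: "good (eval_atom vo vt b)"
    if r: "r \<in> \<Pi>" and b: "b \<in> set (body r)" and hg: "good (eval_atom vo vt (head r))" for r vo vt b
  proof -
    have wfr: "wf_rule srt idb r" using wf r .
    have pb: "pred b \<in> preds \<Pi>" unfolding preds_def atoms_rule_def using r b by blast
    have dep: "(pred (head r), pred b) \<in> deps \<Pi>" unfolding deps_def using r b by blast
    have rk: "rank \<Pi> (pred b) + 1 \<le> rank \<Pi> (pred (head r))" using rank_dep[OF fin ac dep] .
    show ?thesis unfolding good_def
    proof (intro impI allI)
      fix t' assume ne: "snd (eval_atom vo vt b) \<noteq> []"
        and lt: "last (snd (eval_atom vo vt b)) = VT t'"
      have neb: "args b \<noteq> []" using ne by (simp add: eval_atom_def)
      define x where "x = last (args b)"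
      have xin: "x \<in> set (args b)" using neb by (simp add: x_def)
      have ex: "eval_tm vo vt x = VT t'" using lt neb by (simp add: eval_atom_def x_def last_map)
      have fb: "fst (eval_atom vo vt b) = pred b" by (simp add: eval_atom_def)
      have tv: "t' \<le> \<tau>0 + int a * (int R - int (rank \<Pi> (pred b)))" if vx: "v \<in> tvars_tm x" for v
      proof -
        have t'eq: "t' = vt v + delta x" using eval_tvar[OF vx, of vo vt] ex by simp
        have vb: "v \<in> tvars_atom b" using vx xin unfolding tvars_atom_def by blast
        have conn: "connected_rule r" using assms(3) r by blast
        have vh: "v \<in> tvars_atom (head r)" using conn vb b unfolding connected_rule_def by blast
        then obtain y where yin: "y \<in> set (args (head r))" "v \<in> tvars_tm y"
          unfolding tvars_atom_def by blast
        have sy: "tm_sort y = STime" using yin(2) by (cases y) auto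
        have wfh: "wf_atom srt (head r)" using wfr unfolding wf_rule_def atoms_rule_def by auto
        have ylast: "y = last (args (head r))" using head_tvar_last[OF wfh yin(1) sy] .
        have neh: "args (head r) \<noteq> []" using yin(1) by auto
        have hev: "last (snd (eval_atom vo vt (head r))) = VT (vt v + delta y)"
          using eval_tvar[OF yin(2), of vo vt] ylast neh by (simp add: eval_atom_def last_map)
        have hb: "vt v + delta y \<le> \<tau>0 + int a * (int R - int (rank \<Pi> (pred (head r))))"
          using hg neh hev unfolding good_def by (simp add: eval_atom_def)
        have tvr: "tvars_rule r \<noteq> {}" unfolding tvars_rule_def atoms_rule_def using vh by blast
        have sx: "tm_sort x = STime" using vx by (cases x) auto
        have htb: "has_time b" unfolding has_time_def using neb sx x_def by simp
        have finS: "finite {nat \<bar>delta (last (args (head r))) - delta (last (args b))\<bar> | b. b \<in> set (body r) \<and> has_time b}"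
          by (rule finite_subset[of _ "(\<lambda>b. nat \<bar>delta (last (args (head r))) - delta (last (args b))\<bar>) ` set (body r)"]) auto
        have memS: "nat \<bar>delta y - delta x\<bar> \<in> {nat \<bar>delta (last (args (head r))) - delta (last (args b))\<bar> | b. b \<in> set (body r) \<and> has_time b}"
          using b htb ylast x_def by blast
        have "nat \<bar>delta y - delta x\<bar> \<le> rule_radius r"
          unfolding rule_radius_def using tvr finS memS by simp
        then have "nat \<bar>delta y - delta x\<bar> \<le> a" using rr[OF r] by linarith
        then have dx: "delta x \<le> delta y + int a" by linarith
        have "int a * (int R - int (rank \<Pi> (pred (head r))) + 1) \<le> int a * (int R - int (rank \<Pi> (pred b)))"
          by (rule mult_left_mono) (use rk in auto)
        then have "int a * (int R - int (rank \<Pi> (pred (head r)))) + int a \<le> int a * (int R - int (rank \<Pi> (pred b)))"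
          by (simp add: algebra_simps)
        then show ?thesis using t'eq dx hb by linarith
      qed
      have "t' \<le> \<tau>0 + int a * (int R - int (rank \<Pi> (pred b)))"
      proof (cases x)
        case (OC c) then show ?thesis using ex by simp
      next
        case (OV c) then show ?thesis using ex by simp
      next
        case (TC i)
        then have "t' = i" using ex by simp
        moreover have "i \<in> time_points \<Pi>" unfolding time_points_def atoms_rule_def
          using r b xin TC by blast
        moreover have "0 \<le> int a * (int R - int (rank \<Pi> (pred b)))"
          using rankR[OF pb] by simp
        ultimately show ?thesis using tp by fastforce
      next
        case (TV v)
        then have vx: "v \<in> tvars_tm x" by simp
        show ?thesis using tv[OF vx] .
      next
        case (TVP v k)
        then have vx: "v \<in> tvars_tm x" by simp
        show ?thesis using tv[OF vx] .
      qed
      then show "t' \<le> \<tau>0 + int a * (int R - int (rank \<Pi> (fst (eval_atom vo vt b))))"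
        using fb by simp
    qed
  qed
  show ?thesis
    unfolding entails_def
  proof (intro allI impI)
    fix J assume J: "\<forall>r\<in>\<Pi>. sat_rule J r"
      and DJ: "restrict_ds srt D' (Max (insert \<tau>a (time_points \<Pi>)) + int (rad \<Pi>)) \<subseteq> J"
    define I where "I = {g. good g \<longrightarrow> g \<in> J}"
    have IM: "\<forall>r\<in>\<Pi>. sat_rule I r"
      unfolding sat_rule_def
    proof (intro ballI allI impI)
      fix r vo vt assume r: "r \<in> \<Pi>" and bI: "\<forall>b\<in>set (body r). eval_atom vo vt b \<in> I"
      show "eval_atom vo vt (head r) \<in> I" unfolding I_def
      proof (intro CollectI impI)
        assume hg: "good (eval_atom vo vt (head r))"
        have "\<forall>b\<in>set (body r). eval_atom vo vt b \<in> J"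
          using bI core[OF r _ hg] unfolding I_def by blast
        then show "eval_atom vo vt (head r) \<in> J" using J r unfolding sat_rule_def by blast
      qed
    qed
    have DI: "D' \<subseteq> I"
    proof
      fix g assume gD: "g \<in> D'"
      show "g \<in> I" unfolding I_def
      proof (intro CollectI impI)
        assume gg: "good g"
        have fg: "fact srt g" using assms(4) gD unfolding dataset_def by blast
        have "g \<in> restrict_ds srt D' (\<tau>0 + int (rad \<Pi>))"
        proof (cases "rigid srt (fst g)")
          case True then show ?thesis unfolding restrict_ds_def using gD by simp
        next
          case False
          then have tmp: "temporal srt (fst g)" using fg unfolding fact_def by auto
          have m: "map val_sort (snd g) = srt (fst g)" using fg unfolding fact_def by auto
          have ne: "snd g \<noteq> []" using m tmp unfolding temporal_def by auto
          have "val_sort (last (snd g)) = STime" using m tmp ne by (metis last_map temporal_def)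
          then obtain t' where lt: "last (snd g) = VT t'" by (cases "last (snd g)") auto
          have t1: "t' \<le> \<tau>0 + int a * (int R - int (rank \<Pi> (fst g)))"
            using gg ne lt unfolding good_def by simp
          have "int a * (int R - int (rank \<Pi> (fst g))) \<le> int a * int (card \<Pi>)"
            by (rule mult_left_mono) (use Rcard in auto)
          also have "\<dots> = int (rad \<Pi>)" unfolding rad_def a_def by simp
          finally show ?thesis unfolding restrict_ds_def using gD tmp lt t1 by auto
        qed
        then show "g \<in> J" using DJ unfolding \<tau>0_def by blast
      qed
    qed
    have "(P, map VO os @ [VT \<tau>]) \<in> I" using assms(7) IM DI unfolding entails_def by blast
    moreover have "good (P, map VO os @ [VT \<tau>])"
      unfolding good_def using assms(6) unfolding \<tau>0_def a_def R_def by simp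
    ultimately show "(P, map VO os @ [VT \<tau>]) \<in> J" unfolding I_def by blast
  qed
qed

end
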